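(* Fix an integer $n\ge 2$, and assume that for every choice of positive integers $v_1,\ldots,v_n$ one has either $\mathrm{ML}(v_1,\ldots,v_n)=\frac{s}{ns+1}$ for some $s\in\mathbb{N}$ or $\mathrm{ML}(v_1,\ldots,v_n)\ge \frac1n$. Then for all positive integers $w_1,\ldots,w_{n-1}$ one has $\mathrm{ML}(w_1,\ldots,w_{n-1})\ge \frac1n$.
   Context: For a real number $x$, $\Vert x\Vert$ denotes the distance from $x$ to the nearest integer. For positive integers $v_1,\ldots,v_k$, the maximum loneliness is $\mathrm{ML}(v_1,\ldots,v_k)=\max_{t\in\mathbb{R}}\min_{1\le i\le k}\Vert t v_i\Vert$. Here $\mathbb{N}=\{1,2,3,\ldots\}$. *)

theory Defs
  imports "HOL-Analysis.Analysis"
begin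

definition dist_int :: "real \<Rightarrow> real" where
  "dist_int x = (INF m::int. \<bar>x - real_of_int m\<bar>)"

text \<open>Maximum loneliness of positive integers v 1, ..., v k (indices 1..k).
  (Written maxlone.) The maximum over t is attained; we write it as a supremum.\<close>
definition maxlone :: "nat \<Rightarrow> (nat \<Rightarrow> nat) \<Rightarrow> real" where
  "maxlone k v = (SUP t::real. (MIN i\<in>{1..k}. dist_int (t * real (v i))))"

end

theory Submission
  imports Defs
begin

lemma dist_int_round: "dist_int x = \<bar>x - of_int (round x)\<bar>"
  unfolding dist_int_def
proof (rule antisym)
  show "(INF m::int. \<bar>x - real_of_int m\<bar>) \<le> \<bar>x - of_int (round x)\<bar>"
    by (rule cINF_lower) (auto intro: bdd_belowI[of _ 0])
  show "\<bar>x - of_int (round x)\<bar> \<le> (INF m::int. \<bar>x - real_of_int m\<bar>)"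
    by (rule cINF_greatest) (auto simp: round_diff_minimal)
qed

lemma dist_int_le: "dist_int x \<le> \<bar>x - of_int m\<bar>"
  by (simp add: dist_int_round round_diff_minimal)

lemma dist_int_nonneg: "dist_int x \<ge> 0"
  by (simp add: dist_int_round)

lemma dist_int_half: "dist_int x \<le> 1/2"
  using of_int_round_abs_le[of x] by (simp add: dist_int_round abs_minus_commute)

lemma dist_int_lip: "dist_int x \<le> dist_int y + \<bar>x - y\<bar>"
proof -
  have "dist_int x \<le> \<bar>x - of_int (round y)\<bar>" by (rule dist_int_le)
  also have "\<dots> \<le> \<bar>y - of_int (round y)\<bar> + \<bar>x - y\<bar>" by simp
  finally show ?thesis by (simp add: dist_int_round)
qed

lemma dist_int_shift: "dist_int (x + of_int k) = dist_int x"
proof (rule antisym)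
  have "dist_int (x + of_int k) \<le> \<bar>x + of_int k - of_int (round x + k)\<bar>" by (rule dist_int_le)
  then show "dist_int (x + of_int k) \<le> dist_int x" by (simp add: dist_int_round)
  have "dist_int x \<le> \<bar>x - of_int (round (x + of_int k) - k)\<bar>" by (rule dist_int_le)
  then show "dist_int x \<le> dist_int (x + of_int k)" by (simp add: dist_int_round)
qed

lemma dist_int_of_int: "dist_int (of_int k) = 0"
  by (simp add: dist_int_round)

lemma dist_int_half_eq: "dist_int (of_int k + 1/2) = 1/2"
proof -
  have "\<bar>of_int k + 1/2 - of_int m\<bar> \<ge> (1/2::real)" for m :: int
  proof (cases "m \<le> k")
    case True then have "real_of_int m \<le> of_int k" by simp
    then show ?thesis by simp
  next
    case False then have "real_of_int m \<ge> of_int k + 1" by simp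
    then show ?thesis by simp
  qed
  then have "dist_int (of_int k + 1/2) \<ge> 1/2" by (simp add: dist_int_round)
  with dist_int_half[of "of_int k + 1/2"] show ?thesis by linarith
qed

definition Gf :: "nat \<Rightarrow> (nat \<Rightarrow> nat) \<Rightarrow> real \<Rightarrow> real" where
  "Gf k v t = (MIN i\<in>{1..k}. dist_int (t * real (v i)))"

lemma maxlone_Gf: "maxlone k v = (SUP t. Gf k v t)"
  unfolding maxlone_def Gf_def ..

lemma Gf_le: "i \<in> {1..k} \<Longrightarrow> Gf k v t \<le> dist_int (t * real (v i))"
  unfolding Gf_def by (rule Min_le) auto

lemma Gf_in: "k \<ge> 1 \<Longrightarrow> \<exists>i\<in>{1..k}. Gf k v t = dist_int (t * real (v i))"
proof -
  assume "k \<ge> 1"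
  then have "Gf k v t \<in> (\<lambda>i. dist_int (t * real (v i))) ` {1..k}"
    unfolding Gf_def by (intro Min_in) auto
  then show ?thesis by auto
qed

lemma Gf_half: "k \<ge> 1 \<Longrightarrow> Gf k v t \<le> 1/2"
  using Gf_le[of 1 k v t] dist_int_half[of "t * real (v 1)"] by auto

lemma bdd_Gf: "k \<ge> 1 \<Longrightarrow> bdd_above (range (Gf k v))"
  using Gf_half[of k v] by (intro bdd_aboveI2[of _ _ "1/2"]) auto

lemma Gf_upper: "k \<ge> 1 \<Longrightarrow> Gf k v t \<le> maxlone k v"
  unfolding maxlone_Gf by (rule cSUP_upper) (auto simp: bdd_Gf)

lemma Gf_lip: assumes "k \<ge> 1"
  shows "Gf k v t \<le> Gf k v t' + (\<Sum>i\<in>{1..k}. real (v i)) * \<bar>t - t'\<bar>"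
proof -
  obtain i where i: "i \<in> {1..k}" "Gf k v t' = dist_int (t' * real (v i))"
    using Gf_in[OF assms] by blast
  have "real (v i) \<le> (\<Sum>i\<in>{1..k}. real (v i))"
    using i(1) by (intro member_le_sum) auto
  then have "real (v i) * \<bar>t - t'\<bar> \<le> (\<Sum>i\<in>{1..k}. real (v i)) * \<bar>t - t'\<bar>"
    by (intro mult_right_mono) auto
  moreover have "\<bar>t * real (v i) - t' * real (v i)\<bar> = real (v i) * \<bar>t - t'\<bar>"
    by (simp add: left_diff_distrib[symmetric] abs_mult)
  moreover have "Gf k v t \<le> dist_int (t * real (v i))" using i(1) by (rule Gf_le)
  moreover note dist_int_lip[of "t * real (v i)" "t' * real (v i)"]
  ultimately show ?thesis using i(2) by linarith
qed

lemma Gf_shift: "Gf k v (t + of_int m) = Gf k v t"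
proof -
  have "dist_int ((t + of_int m) * real (v i)) = dist_int (t * real (v i))" for i
  proof -
    have "(t + of_int m) * real (v i) = t * real (v i) + of_int (m * int (v i))"
      by (simp add: algebra_simps)
    then show ?thesis using dist_int_shift[of "t * real (v i)" "m * int (v i)"] by simp
  qed
  then show ?thesis unfolding Gf_def by simp
qed

lemma Gf_cont: assumes "k \<ge> 1" shows "continuous_on S (Gf k v)"
proof -
  define L where "L = (\<Sum>i\<in>{1..k}. real (v i)) + 1"
  have L: "L > 0" unfolding L_def by (simp add: sum_nonneg add_nonneg_pos)
  have lip: "\<bar>Gf k v t - Gf k v t'\<bar> \<le> L * \<bar>t - t'\<bar>" for t t'
  proof -
    have "(\<Sum>i\<in>{1..k}. real (v i)) * \<bar>t - t'\<bar> \<le> L * \<bar>t - t'\<bar>"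
      unfolding L_def by (intro mult_right_mono) auto
    then show ?thesis using Gf_lip[OF assms, of v t t'] Gf_lip[OF assms, of v t' t]
      by (auto simp: abs_minus_commute abs_le_iff)
  qed
  show ?thesis unfolding continuous_on_iff
  proof (intro ballI allI impI)
    fix x e :: real assume "e > 0"
    show "\<exists>d>0. \<forall>x'\<in>S. dist x' x < d \<longrightarrow> dist (Gf k v x') (Gf k v x) < e"
    proof (intro exI[of _ "e / L"] conjI ballI impI)
      show "e / L > 0" using \<open>e > 0\<close> L by simp
      fix x' assume "dist x' x < e / L"
      then have "L * \<bar>x' - x\<bar> < e" using L by (simp add: dist_real_def field_simps)
      then show "dist (Gf k v x') (Gf k v x) < e"
        using lip[of x' x] by (simp add: dist_real_def)
    qed
  qed
qed

lemma Gf_attain: assumes "k \<ge> 1" shows "\<exists>t. Gf k v t = maxlone k v"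
proof -
  obtain x where x: "x \<in> {0..1}" "\<forall>y\<in>{0..1}. Gf k v y \<le> Gf k v x"
    using continuous_attains_sup[of "{0..1::real}" "Gf k v"] Gf_cont[OF assms] by auto
  have "Gf k v t \<le> Gf k v x" for t
  proof -
    have "Gf k v t = Gf k v (frac t + of_int \<lfloor>t\<rfloor>)" by (simp add: frac_def)
    also have "\<dots> = Gf k v (frac t)" by (rule Gf_shift)
    also have "\<dots> \<le> Gf k v x" using x(2) frac_lt_1[of t] frac_ge_0[of t] by auto
    finally show ?thesis .
  qed
  then have "maxlone k v \<le> Gf k v x" unfolding maxlone_Gf by (intro cSUP_least) auto
  with Gf_upper[OF assms, of v x] show ?thesis by (intro exI[of _ x]) simp
qed


lemma Gf_ext: assumes "n \<ge> 2"
  shows "Gf n (\<lambda>i. if i = n then c else w i) t = min (dist_int (t * real c)) (Gf (n-1) w t)"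
    (is "Gf n ?V t = _")
proof (rule antisym)
  have "Gf n ?V t \<le> dist_int (t * real c)" using Gf_le[of n n ?V t] assms by simp
  moreover have "Gf n ?V t \<le> Gf (n-1) w t"
  proof -
    have n1: "n - 1 \<ge> 1" using assms by simp
    obtain i where i: "i \<in> {1..n-1}" "Gf (n-1) w t = dist_int (t * real (w i))"
      using Gf_in[OF n1, of w t] by (elim bexE)
    then have "i \<in> {1..n}" "i \<noteq> n" by auto
    then show ?thesis using Gf_le[of i n ?V t] i(2) by simp
  qed
  ultimately show "Gf n ?V t \<le> min (dist_int (t * real c)) (Gf (n-1) w t)" by simp
next
  obtain i where i: "i \<in> {1..n}" "Gf n ?V t = dist_int (t * real (?V i))"
    using Gf_in[of n ?V t] assms by auto
  show "min (dist_int (t * real c)) (Gf (n-1) w t) \<le> Gf n ?V t"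
  proof (cases "i = n")
    case True then show ?thesis using i by simp
  next
    case False
    then have "i \<in> {1..n-1}" using i(1) by auto
    then show ?thesis using Gf_le[of i "n-1" w t] i(2) False by simp
  qed
qed

theorem proposition3p3:
  fixes n :: nat
  assumes n2: "n \<ge> 2"
    and hyp: "\<And>v :: nat \<Rightarrow> nat. (\<forall>i\<in>{1..n}. v i > 0) \<Longrightarrow>
          (\<exists>s::nat. s \<ge> 1 \<and> maxlone n v = real s / (real n * real s + 1)) \<or> maxlone n v \<ge> 1 / real n"
  shows "\<forall>w :: nat \<Rightarrow> nat. (\<forall>i\<in>{1..n-1}. w i > 0) \<longrightarrow> maxlone (n - 1) w \<ge> 1 / real n"
proof (intro allI impI)
  fix w :: "nat \<Rightarrow> nat"
  assume wpos: "\<forall>i\<in>{1..n-1}. w i > 0"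
  define \<delta> where "\<delta> = maxlone (n-1) w"
  have n1: "n - 1 \<ge> 1" using n2 by simp
  show "maxlone (n - 1) w \<ge> 1 / real n"
  proof (rule ccontr)
    assume "\<not> maxlone (n - 1) w \<ge> 1 / real n"
    then have dlt: "\<delta> < 1 / real n" unfolding \<delta>_def by simp
    define v1 where "v1 = (\<lambda>i. if i = n then w 1 else w i)"
    have "Gf n v1 t = Gf (n-1) w t" for t
    proof -
      have "Gf (n-1) w t \<le> dist_int (t * real (w 1))" using n1 by (intro Gf_le) auto
      then show ?thesis unfolding v1_def using Gf_ext[OF n2] by simp
    qed
    then have "maxlone n v1 = \<delta>" unfolding \<delta>_def maxlone_Gf by simp
    moreover have "\<forall>i\<in>{1..n}. v1 i > 0" using wpos n2 unfolding v1_def by auto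
    ultimately obtain s0 :: nat where s0: "s0 \<ge> 1" "\<delta> = real s0 / (real n * real s0 + 1)"
      using hyp[of v1] dlt by auto
    define q :: nat where "q = n * s0 + 1"
    have qpos: "q > 0" unfolding q_def by simp
    have dq: "\<delta> = real s0 / real q" unfolding q_def s0(2) by simp
    have dpos: "\<delta> > 0" using s0(1) qpos dq by simp
    define P :: nat where "P = (\<Prod>i\<in>{1..n-1}. w i)"
    have Ppos: "P > 0" unfolding P_def using wpos by (intro prod_pos) auto
    define Wn :: nat where "Wn = (\<Sum>i\<in>{1..n-1}. w i)"
    define W :: real where "W = (\<Sum>i\<in>{1..n-1}. real (w i))"
    have WW: "W = real Wn" unfolding W_def Wn_def by simp
    define m :: nat where "m = Wn * q + 1"
    define K :: nat where "K = m * q * P"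
    have Kpos: "K > 0" unfolding K_def m_def using qpos Ppos by simp
    define v where "v = (\<lambda>i. if i = n then K else w i)"
    have Gv: "Gf n v t = min (dist_int (t * real K)) (Gf (n-1) w t)" for t
      unfolding v_def by (rule Gf_ext[OF n2])
    define \<mu> where "\<mu> = maxlone n v"
    have A: "\<mu> < \<delta>"
    proof -
      obtain t where t: "Gf n v t = \<mu>" using Gf_attain[of n v] n2 unfolding \<mu>_def by auto
      have "Gf n v t < \<delta>"
      proof (cases "Gf (n-1) w t < \<delta>")
        case True then show ?thesis using Gv[of t] by simp
      next
        case False
        then have "Gf (n-1) w t = \<delta>" using Gf_upper[OF n1, of w t] unfolding \<delta>_def by simp
        moreover obtain i where i: "i \<in> {1..n-1}" "Gf (n-1) w t = dist_int (t * real (w i))"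
          using Gf_in[OF n1, of w t] by auto
        ultimately have "\<bar>t * real (w i) - of_int (round (t * real (w i)))\<bar> = real s0 / real q"
          using dq dist_int_round by simp
        then have "t * real (w i) * real q - of_int (round (t * real (w i))) * real q = real s0
              \<or> t * real (w i) * real q - of_int (round (t * real (w i))) * real q = - real s0"
          using qpos by (auto simp: abs_if field_simps split: if_splits)
        then have "\<exists>j::int. t * real (w i) * real q = of_int j"
        proof (elim disjE)
          assume h: "t * real (w i) * real q - of_int (round (t * real (w i))) * real q = real s0"
          show ?thesis
            by (rule exI[of _ "round (t * real (w i)) * int q + int s0"]) (use h in simp)
        next
          assume h: "t * real (w i) * real q - of_int (round (t * real (w i))) * real q = - real s0"
          show ?thesis
            by (rule exI[of _ "round (t * real (w i)) * int q - int s0"]) (use h in simp)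
        qed
        then obtain j :: int where j: "t * real (w i) * real q = of_int j" by (elim exE)
        have Pi: "P = w i * (\<Prod>l\<in>{1..n-1}-{i}. w l)"
          unfolding P_def using i(1) by (simp add: prod.remove)
        have "t * real K = t * real (w i) * real q * real m * real (\<Prod>l\<in>{1..n-1}-{i}. w l)"
          unfolding K_def Pi by (simp add: algebra_simps)
        also have "\<dots> = of_int (j * int m * int (\<Prod>l\<in>{1..n-1}-{i}. w l))"
          using j by simp
        finally have "dist_int (t * real K) = 0" by (simp only: dist_int_of_int)
        then show ?thesis using Gv[of t] dpos by simp
      qed
      then show ?thesis using t by simp
    qed
    have B: "\<mu> \<ge> \<delta> - W / real K"
    proof -
      obtain t0 where t0: "Gf (n-1) w t0 = \<delta>" using Gf_attain[OF n1, of w] unfolding \<delta>_def by auto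
      have Kr: "real K > 0" using Kpos by simp
      define fl where "fl = \<lfloor>t0 * real K\<rfloor>"
      define t where "t = (of_int fl + 1/2) / real K"
      have tK: "t * real K = of_int fl + 1/2" unfolding t_def using Kr by simp
      have f1: "of_int fl \<le> t0 * real K" "t0 * real K < of_int fl + 1"
        unfolding fl_def by simp_all
      have "\<bar>t * real K - t0 * real K\<bar> \<le> 1"
        unfolding tK using f1 by (simp add: abs_le_iff)
      then have "\<bar>t0 - t\<bar> * real K \<le> 1"
        by (simp add: left_diff_distrib[symmetric] abs_mult abs_minus_commute)
      then have tt: "\<bar>t0 - t\<bar> \<le> 1 / real K" using Kr by (simp add: field_simps)
      have "W * \<bar>t0 - t\<bar> \<le> W * (1 / real K)"
        using tt unfolding W_def by (intro mult_left_mono) (auto intro: sum_nonneg)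
      moreover have "Gf (n-1) w t0 \<le> Gf (n-1) w t + W * \<bar>t0 - t\<bar>"
        unfolding W_def by (rule Gf_lip[OF n1])
      ultimately have c1: "Gf (n-1) w t \<ge> \<delta> - W / real K" using t0 by simp
      have "\<delta> \<le> 1/2" using t0 Gf_half[OF n1, of w t0] by simp
      moreover have "dist_int (t * real K) = 1/2" unfolding tK by (rule dist_int_half_eq)
      moreover have Wk: "W / real K \<ge> 0" unfolding W_def by (simp add: sum_nonneg)
      ultimately have "Gf n v t \<ge> \<delta> - W / real K"
        using c1 Gv[of t] by auto
      moreover have "Gf n v t \<le> \<mu>" unfolding \<mu>_def using Gf_upper[of n v t] n2 by simp
      ultimately show ?thesis by simp
    qed
    have "\<forall>i\<in>{1..n}. v i > 0" using wpos Kpos unfolding v_def by auto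
    then obtain s :: nat where s: "s \<ge> 1" "\<mu> = real s / (real n * real s + 1)"
      using hyp[of v] A dlt unfolding \<mu>_def by force
    have ns: "real n * real s + 1 > 0" by (intro add_nonneg_pos) auto
    have "real s / (real n * real s + 1) < real s0 / (real n * real s0 + 1)"
      using A s(2) s0(2) by simp
    moreover have ns0: "real n * real s0 + 1 > 0" by (intro add_nonneg_pos) auto
    ultimately have "real s / (real n * real s + 1) * ((real n * real s + 1) * (real n * real s0 + 1))
        < real s0 / (real n * real s0 + 1) * ((real n * real s + 1) * (real n * real s0 + 1))"
      using ns by (intro mult_strict_right_mono) auto
    moreover have "real s / (real n * real s + 1) * ((real n * real s + 1) * (real n * real s0 + 1))
        = real s * (real n * real s0 + 1)" using ns by (simp add: field_simps)
    moreover have "real s0 / (real n * real s0 + 1) * ((real n * real s + 1) * (real n * real s0 + 1))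
        = real s0 * (real n * real s + 1)" using ns0 by (simp add: field_simps)
    ultimately have "real s * (real n * real s0 + 1) < real s0 * (real n * real s + 1)"
      by simp
    moreover have "real s * (real n * real s0 + 1) = real n * real s * real s0 + real s"
      "real s0 * (real n * real s + 1) = real n * real s * real s0 + real s0"
      by (simp_all add: algebra_simps)
    ultimately have "real s < real s0" by linarith
    then have ss: "s < s0" by simp
    have "\<delta> - \<mu> = (real s0 - real s) / (real q * (real n * real s + 1))"
    proof -
      have "\<delta> - \<mu> = real s0 / real q - real s / (real n * real s + 1)" using dq s(2) by simp
      also have "\<dots> = (real s0 * (real n * real s + 1) - real s * real q) / (real q * (real n * real s + 1))"
        using qpos ns by (intro diff_frac_eq) auto
      also have "real s0 * (real n * real s + 1) - real s * real q = real s0 - real s"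
        unfolding q_def by (simp add: algebra_simps)
      finally show ?thesis .
    qed
    moreover have "real s0 - real s \<ge> 1" using ss by simp
    moreover have "real n * real s + 1 \<le> real q" unfolding q_def using ss by (simp add: mult_left_mono)
    ultimately have "\<delta> - \<mu> \<ge> 1 / (real q * real q)"
    proof -
      assume e: "\<delta> - \<mu> = (real s0 - real s) / (real q * (real n * real s + 1))"
        and a1: "real s0 - real s \<ge> 1" and b: "real n * real s + 1 \<le> real q"
      have qb: "real q * (real n * real s + 1) > 0" using qpos ns by simp
      have "real q * (real n * real s + 1) \<le> real q * real q"
        using b qpos by (intro mult_left_mono) auto
      then have "1 / (real q * real q) \<le> 1 / (real q * (real n * real s + 1))"
        using qb by (intro divide_left_mono) auto
      also have "\<dots> \<le> (real s0 - real s) / (real q * (real n * real s + 1))"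
        using a1 qb by (intro divide_right_mono) auto
      finally show ?thesis using e by simp
    qed
    moreover have "W / real K < 1 / (real q * real q)"
    proof -
      have "real m * real P \<ge> real m" using Ppos mult_left_mono[of 1 "real P" "real m"] by simp
      moreover have "real m = W * real q + 1" unfolding m_def WW by simp
      ultimately have "W * real q < real m * real P" by simp
      then have "W * real q * real q < real m * real P * real q" using qpos by simp
      then show ?thesis using qpos Kpos unfolding K_def by (simp add: field_simps)
    qed
    ultimately show False using B by simp
  qed
qed

end
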